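(* Let $k$ be an algebraically closed field, let $\lambda$ be a partition of $n$ (with $\lambda_j=0$ beyond its length), and let $\mathcal O_\lambda\subseteq\mathfrak{gl}_n(k)$ be the nilpotent orbit of matrices with Jordan block sizes $\lambda$. For each $i\in\{1,\dots,n-1\}$ there exists $X\in\mathcal O_\lambda$ such that $X_{\le i,\le i}$ has stable rank exactly $d_{\lambda,i}:=i-\sum_{j>n-i}\lambda_j$.
   Context: $X_{\le i,\le i}$ is the submatrix of the first $i$ rows and columns. For an $i\times i$ matrix $Y$, $s_j(Y)$ is the sum of the principal $j\times j$ minors of $Y$; the stable rank of $Y$ is the largest $j$ with $s_j(Y)\ne0$, equivalently the number of nonzero eigenvalues counted with algebraic multiplicity. *)

theory Defs
  imports "HOL-Computational_Algebra.Polynomial" "Jordan_Normal_Form.Jordan_Normal_Form"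
    "Jordan_Normal_Form.DL_Submatrix"
begin

text \<open>A partition of n: a weakly decreasing list of positive parts summing to n.
  Parts beyond the length are implicitly 0.\<close>
definition is_partition :: "nat list \<Rightarrow> nat \<Rightarrow> bool" where
  "is_partition lam n \<longleftrightarrow> sorted_wrt (\<ge>) lam \<and> (\<forall>p\<in>set lam. 0 < p) \<and> sum_list lam = n"

definition nilpotent_orbit :: "nat \<Rightarrow> nat list \<Rightarrow> 'a::field mat set" where
  "nilpotent_orbit n lam =
     {X \<in> carrier_mat n n. similar_mat X (jordan_matrix (map (\<lambda>s. (s, 0)) lam))}"

definition lead_sub :: "'a mat \<Rightarrow> nat \<Rightarrow> 'a mat" where
  "lead_sub X i = submatrix X {..<i} {..<i}"

definition principal_minor_sum :: "'a::comm_ring_1 mat \<Rightarrow> nat \<Rightarrow> 'a" where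
  "principal_minor_sum Y j =
     (\<Sum>S\<in>{S. S \<subseteq> {..<dim_row Y} \<and> card S = j}. det (submatrix Y S S))"

text \<open>Stable rank: the largest j with s_j(Y) nonzero (s_0 = 1, so this is well defined).\<close>
definition stable_rank :: "'a::comm_ring_1 mat \<Rightarrow> nat" where
  "stable_rank Y = (GREATEST j. j \<le> dim_row Y \<and> principal_minor_sum Y j \<noteq> 0)"

text \<open>d_{lambda,i} = i - sum_{j > n-i} lambda_j  (1-indexed parts).\<close>
definition d_lam :: "nat \<Rightarrow> nat list \<Rightarrow> nat \<Rightarrow> int" where
  "d_lam n lam i = int i - int (sum_list (drop (n - i) lam))"

end

theory Submission
  imports Defs
begin

lemma bij_pick: assumes "finite S" shows "bij_betw (pick S) {..<card S} S"
proof -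
  have inj: "inj_on (pick S) {..<card S}"
    by (rule inj_onI, metis lessThan_iff nat_neq_iff pick_mono_le)
  have "pick S ` {..<card S} = S"
  proof
    show "pick S ` {..<card S} \<subseteq> S" using pick_in_set_le by auto
    show "S \<subseteq> pick S ` {..<card S}"
    proof
      fix x assume x: "x \<in> S"
      have "{a\<in>S. a < x} \<subset> S" using x by auto
      hence c: "card {a\<in>S. a < x} < card S" using assms by (simp add: psubset_card_mono)
      have e: "x = pick S (card {a\<in>S. a < x})" using pick_card_in_set[OF x] by simp
      show "x \<in> pick S ` {..<card S}" using e c by blast
    qed
  qed
  with inj show ?thesis unfolding bij_betw_def by auto
qed

lemma perm_similar:
  fixes A :: "'a::comm_ring_1 mat"
  assumes A: "A \<in> carrier_mat n n" and f: "bij_betw f {..<n} {..<n}"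
  shows "similar_mat (mat n n (\<lambda>(p,q). A $$ (f p, f q))) A"
proof -
  define P :: "'a mat" where "P = mat n n (\<lambda>(p,k). if f p = k then 1 else 0)"
  define Q :: "'a mat" where "Q = mat n n (\<lambda>(k,q). if f q = k then 1 else 0)"
  have fn: "\<And>p. p < n \<Longrightarrow> f p < n" using f by (auto simp: bij_betw_def)
  have finj: "\<And>p q. p < n \<Longrightarrow> q < n \<Longrightarrow> f p = f q \<longleftrightarrow> p = q" using f
    by (auto simp: bij_betw_def inj_on_def)
  have PQ: "P * Q = 1\<^sub>m n"
  proof (rule eq_matI)
    fix p q assume pq: "p < dim_row (1\<^sub>m n :: 'a mat)" "q < dim_col (1\<^sub>m n :: 'a mat)"
    hence "(P * Q) $$ (p,q) = (\<Sum>k = 0..<n. (if f p = k then 1 else 0) * (if f q = k then 1 else 0))"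
      by (simp add: P_def Q_def index_mult_mat scalar_prod_def)
    also have "\<dots> = (\<Sum>k = 0..<n. if k = f p then (if f q = k then 1 else 0) else 0)"
      by (rule sum.cong, auto)
    also have "\<dots> = (if f q = f p then 1 else 0)" using fn pq by simp
    finally show "(P * Q) $$ (p,q) = 1\<^sub>m n $$ (p,q)" using pq finj by auto
  qed (auto simp: P_def Q_def)
  have QP: "Q * P = 1\<^sub>m n"
  proof (rule eq_matI)
    fix k l assume kl: "k < dim_row (1\<^sub>m n :: 'a mat)" "l < dim_col (1\<^sub>m n :: 'a mat)"
    hence "(Q * P) $$ (k,l) = (\<Sum>p = 0..<n. (if f p = k then 1 else 0) * (if f p = l then 1 else 0))"
      by (simp add: P_def Q_def index_mult_mat scalar_prod_def)
    also have "\<dots> = (\<Sum>p \<in> {..<n}. (\<lambda>x. (if x = k then 1 else 0) * (if x = l then 1 else 0)) (f p))"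
      by (simp add: atLeast0LessThan)
    also have "\<dots> = (\<Sum>x \<in> {..<n}. (if x = k then 1 else 0) * (if x = l then 1 else 0))"
      using sum.reindex_bij_betw[OF f, of "\<lambda>x. (if x = k then (1::'a) else 0) * (if x = l then 1 else 0)"] by simp
    also have "\<dots> = (\<Sum>x \<in> {..<n}. if x = k then (if k = l then 1 else 0) else 0)"
      by (rule sum.cong, auto)
    also have "\<dots> = (if k = l then 1 else 0)" using kl by simp
    finally show "(Q * P) $$ (k,l) = 1\<^sub>m n $$ (k,l)" using kl by auto
  qed (auto simp: P_def Q_def)
  have E: "mat n n (\<lambda>(p,q). A $$ (f p, f q)) = P * A * Q"
  proof (rule eq_matI)
    fix p q assume pq: "p < dim_row (P * A * Q)" "q < dim_col (P * A * Q)"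
    hence pq': "p < n" "q < n" by (auto simp: P_def Q_def)
    have PA: "(P * A) $$ (p,l) = A $$ (f p, l)" if l: "l < n" for l
    proof -
      have "(P * A) $$ (p,l) = (\<Sum>k = 0..<n. (if f p = k then 1 else 0) * A $$ (k,l))"
        using pq' l A by (simp add: P_def index_mult_mat scalar_prod_def)
      also have "\<dots> = (\<Sum>k = 0..<n. if k = f p then A $$ (k,l) else 0)"
        by (rule sum.cong, auto)
      also have "\<dots> = A $$ (f p, l)" using fn pq' by simp
      finally show ?thesis .
    qed
    have "(P * A * Q) $$ (p,q) = (\<Sum>l = 0..<n. (P * A) $$ (p,l) * (if f q = l then 1 else 0))"
      using pq' A by (simp add: Q_def index_mult_mat scalar_prod_def P_def)
    also have "\<dots> = (\<Sum>l = 0..<n. if l = f q then A $$ (f p, l) else 0)"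
      by (rule sum.cong, auto simp: PA)
    also have "\<dots> = A $$ (f p, f q)" using fn pq' by simp
    finally show "mat n n (\<lambda>(p,q). A $$ (f p, f q)) $$ (p,q) = (P * A * Q) $$ (p,q)"
      using pq' by simp
  qed (insert A, auto simp: P_def Q_def)
  show ?thesis
    by (rule similar_matI[of _ _ P Q n], insert A PQ QP E, auto simp: P_def Q_def)
qed

lemma pick_lessThan: "p < i \<Longrightarrow> pick {..<i} p = p"
proof -
  assume p: "p < i"
  have "card {a. a < i \<and> a \<in> (UNIV::nat set)} = i" by simp
  hence "pick UNIV p = pick {a. a < i \<and> a \<in> (UNIV::nat set)} p"
    using p pick_reduce_set[of p i UNIV] by simp
  moreover have "{a. a < i \<and> a \<in> (UNIV::nat set)} = {..<i}" by auto
  ultimately show ?thesis by (simp add: pick_UNIV)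
qed

lemma exists_lead:
  fixes A :: "'a::comm_ring_1 mat"
  assumes A: "A \<in> carrier_mat n n" and S: "S \<subseteq> {..<n}" and cS: "card S = i"
  shows "\<exists>X. X \<in> carrier_mat n n \<and> similar_mat X A \<and> lead_sub X i = submatrix A S S"
proof -
  define T where "T = {..<n} - S"
  have fS: "finite S" using S finite_subset by blast
  have fT: "finite T" unfolding T_def by simp
  have iln: "i \<le> n" using cS S card_mono[of "{..<n}" S] by simp
  have cT: "card T = n - i" unfolding T_def using S cS fS by (simp add: card_Diff_subset)
  define f where "f p = (if p < i then pick S p else pick T (p - i))" for p
  have bS: "bij_betw (pick S) {..<i} S" using bij_pick[OF fS] cS by simp
  have bT: "bij_betw (pick T) {..<n-i} T" using bij_pick[OF fT] cT by simp
  have fimg: "f p < n" if "p < n" for p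
  proof (cases "p < i")
    case True thus ?thesis using bS S unfolding f_def bij_betw_def by auto
  next
    case False thus ?thesis using bT that unfolding f_def bij_betw_def T_def by auto
  qed
  have finj: "inj_on f {..<n}"
  proof (rule inj_onI)
    fix p q assume p: "p \<in> {..<n}" and q: "q \<in> {..<n}" and e: "f p = f q"
    show "p = q"
    proof (cases "p < i"; cases "q < i")
      assume "p < i" "q < i" thus ?thesis using e bS unfolding f_def bij_betw_def inj_on_def by auto
    next
      assume a: "p < i" "\<not> q < i"
      hence "f p \<in> S" "f q \<in> T" using bS bT p q unfolding f_def bij_betw_def by auto
      thus ?thesis using e unfolding T_def by auto
    next
      assume a: "\<not> p < i" "q < i"
      hence "f q \<in> S" "f p \<in> T" using bS bT p q unfolding f_def bij_betw_def by auto
      thus ?thesis using e unfolding T_def by auto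
    next
      assume a: "\<not> p < i" "\<not> q < i"
      hence "pick T (p - i) = pick T (q - i)" "p - i < n - i" "q - i < n - i" using e p q unfolding f_def by auto
      hence "p - i = q - i" using bT unfolding bij_betw_def inj_on_def by auto
      thus ?thesis using a by simp
    qed
  qed
  have fbij: "bij_betw f {..<n} {..<n}"
    unfolding bij_betw_def using finj endo_inj_surj[of "{..<n}" f] fimg by auto
  define X where "X = mat n n (\<lambda>(p,q). A $$ (f p, f q))"
  have sim: "similar_mat X A" unfolding X_def by (rule perm_similar[OF A fbij])
  have "lead_sub X i = submatrix A S S"
  proof (rule eq_matI)
    have "{p. p < n \<and> p \<in> {..<i}} = {..<i}" using iln by auto
    hence c1: "card {p. p < n \<and> p \<in> {..<i}} = i" by simp
    have "{p. p < n \<and> p \<in> S} = S" using S by auto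
    hence c2: "card {p. p < n \<and> p \<in> S} = i" using cS by simp
    show dr: "dim_row (lead_sub X i) = dim_row (submatrix A S S)"
      using A c1 c2 by (simp add: lead_sub_def dim_submatrix X_def)
    show "dim_col (lead_sub X i) = dim_col (submatrix A S S)"
      using A c1 c2 by (simp add: lead_sub_def dim_submatrix X_def)
    fix p q assume pq: "p < dim_row (submatrix A S S)" "q < dim_col (submatrix A S S)"
    hence pq': "p < i" "q < i" using A c2 by (auto simp: dim_submatrix)
    have "lead_sub X i $$ (p,q) = X $$ (pick {..<i} p, pick {..<i} q)"
      unfolding lead_sub_def by (rule submatrix_index, insert pq' c1, auto simp: X_def)
    also have "\<dots> = A $$ (pick S p, pick S q)"
      using pq' iln by (simp add: pick_lessThan X_def f_def)
    also have "\<dots> = submatrix A S S $$ (p,q)"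
      by (rule submatrix_index[symmetric], insert pq' c2 A, auto)
    finally show "lead_sub X i $$ (p,q) = submatrix A S S $$ (p,q)" .
  qed
  moreover have Xc: "X \<in> carrier_mat n n" unfolding X_def by simp
  ultimately show ?thesis using sim by blast
qed

definition pasc :: "nat \<Rightarrow> 'a::comm_ring_1 mat" where
  "pasc m = mat m m (\<lambda>(k,l). (if k = l then 1 else 0) + (if Suc k = l then 1 else 0)
      - (if k = m - 1 then of_nat (m choose l) else 0))"

lemma pasc_carrier[simp]: "pasc m \<in> carrier_mat m m" by (simp add: pasc_def)
lemma pasc_dim[simp]: "dim_row (pasc m) = m" "dim_col (pasc m) = m" by (simp_all add: pasc_def)

lemma pasc_similar: "similar_mat (pasc m :: 'a::field mat) (jordan_block m 0)"
proof -
  define L :: "'a mat" where "L = mat m m (\<lambda>(j,k). of_nat (j choose k))"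
  have Lc: "L \<in> carrier_mat m m" by (simp add: L_def)
  have detL: "det L = 1"
  proof -
    have "det L = prod_list (diag_mat L)"
      by (rule det_lower_triangular[OF _ Lc], simp add: L_def binomial_eq_0)
    also have "diag_mat L = replicate m 1" by (rule nth_equalityI, auto simp: diag_mat_def L_def)
    finally show ?thesis by simp
  qed
  from det_non_zero_imp_unit[OF Lc, of "()"] detL
  have "L \<in> Units (ring_mat TYPE('a) m ())" by simp
  then obtain B where Bc: "B \<in> carrier_mat m m" and BL: "B * L = 1\<^sub>m m" and LB: "L * B = 1\<^sub>m m"
    unfolding Units_def ring_mat_def by auto
  have key: "L * pasc m = jordan_block m 0 * L"
  proof (rule eq_matI)
    fix j k assume jk: "j < dim_row (jordan_block m (0::'a) * L)" "k < dim_col (jordan_block m (0::'a) * L)"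
    hence j: "j < m" and k: "k < m" by (auto simp: L_def)
    have "(L * pasc m) $$ (j,k) = (\<Sum>l = 0..<m. of_nat (j choose l) *
        ((if l = k then 1 else 0) + (if Suc l = k then 1 else 0) - (if l = m - 1 then of_nat (m choose k) else 0)))"
      using j k by (simp add: L_def pasc_def scalar_prod_def)
    also have "\<dots> = (\<Sum>l = 0..<m. (if l = k then of_nat (j choose l) else 0))
        + (\<Sum>l = 0..<m. (if Suc l = k then of_nat (j choose l) else 0))
        - (\<Sum>l = 0..<m. (if l = m - 1 then of_nat (j choose l) * of_nat (m choose k) else 0))"
    proof -
      have "\<And>l. of_nat (j choose l) *
        ((if l = k then 1 else 0) + (if Suc l = k then 1 else 0) - (if l = m - 1 then of_nat (m choose k) else 0))
        = (if l = k then of_nat (j choose l) else 0) + (if Suc l = k then of_nat (j choose l) else 0)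
          - (if l = m - 1 then of_nat (j choose l) * of_nat (m choose k) else (0::'a))"
        by (simp add: right_diff_distrib distrib_left)
      thus ?thesis by (simp only: sum.distrib sum_subtractf)
    qed
    also have "\<dots> = of_nat (j choose k) + (if 0 < k then of_nat (j choose (k - 1)) else 0)
        - of_nat (j choose (m - 1)) * of_nat (m choose k)"
    proof -
      have a: "(\<Sum>l = 0..<m. (if l = k then of_nat (j choose l) else (0::'a))) = of_nat (j choose k)"
        using k by simp
      have b: "(\<Sum>l = 0..<m. (if Suc l = k then of_nat (j choose l) else (0::'a)))
          = (if 0 < k then of_nat (j choose (k - 1)) else 0)"
      proof (cases k)
        case 0 thus ?thesis by simp
      next
        case (Suc k') thus ?thesis using k by simp
      qed
      have c: "(\<Sum>l = 0..<m. (if l = m - 1 then of_nat (j choose l) * of_nat (m choose k) else (0::'a)))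
          = of_nat (j choose (m - 1)) * of_nat (m choose k)" using j by simp
      show ?thesis using a b c by simp
    qed
    also have "\<dots> = (if Suc j < m then of_nat (Suc j choose k) else 0)"
    proof (cases "Suc j < m")
      case True
      hence "of_nat (j choose (m - 1)) = (0::'a)" by (simp add: binomial_eq_0)
      moreover have "of_nat (j choose k) + (if 0 < k then of_nat (j choose (k - 1)) else 0)
          = (of_nat (Suc j choose k) :: 'a)"
        by (cases k, auto simp: binomial_Suc_Suc)
      ultimately show ?thesis using True by simp
    next
      case False
      hence jm: "m = Suc j" using j by auto
      have "of_nat (j choose k) + (if 0 < k then of_nat (j choose (k - 1)) else 0)
          = (of_nat (m choose k) :: 'a)"
        using jm by (cases k, auto simp: binomial_Suc_Suc)
      thus ?thesis using jm by simp
    qed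
    also have "\<dots> = (jordan_block m 0 * L) $$ (j,k)"
    proof -
      have "(jordan_block m (0::'a) * L) $$ (j,k) = (\<Sum>l = 0..<m. (if Suc j = l then of_nat (l choose k) else 0))"
      proof -
        have "(jordan_block m (0::'a) * L) $$ (j,k) = (\<Sum>l = 0..<m. jordan_block m (0::'a) $$ (j,l) * of_nat (l choose k))"
          using j k by (simp add: L_def scalar_prod_def)
        also have "\<dots> = (\<Sum>l = 0..<m. (if Suc j = l then of_nat (l choose k) else 0))"
          by (rule sum.cong, auto simp: j)
        finally show ?thesis .
      qed
      also have "\<dots> = (if Suc j < m then of_nat (Suc j choose k) else 0)"
        by (auto simp: sum.delta')
      finally show ?thesis by simp
    qed
    finally show "(L * pasc m) $$ (j,k) = (jordan_block m 0 * L) $$ (j,k)" .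
  qed (auto simp: L_def pasc_def)
  have "pasc m = B * jordan_block m 0 * L"
  proof -
    have "pasc m = (B * L) * pasc m" using BL by simp
    also have "\<dots> = B * (L * pasc m)" by (rule assoc_mult_mat[OF Bc Lc pasc_carrier])
    also have "\<dots> = B * (jordan_block m 0 * L)" using key by simp
    also have "\<dots> = B * jordan_block m 0 * L"
      by (rule assoc_mult_mat[OF Bc jordan_block_carrier Lc, symmetric])
    finally show ?thesis .
  qed
  moreover have "{pasc m, jordan_block m 0, B, L} \<subseteq> carrier_mat m m" using Bc Lc by simp
  ultimately show ?thesis using similar_matI[of "pasc m" "jordan_block m 0" B L m] BL LB by blast
qed

fun pinfo :: "nat \<Rightarrow> nat list \<Rightarrow> (bool \<times> bool) list" where
  "pinfo t [] = []"
| "pinfo t (m # ms) = (if 0 < t then replicate (m - 1) (True, True) @ [(False, False)]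
      else replicate m (True, False)) @ pinfo (t - 1) ms"

fun bmat :: "nat \<Rightarrow> nat list \<Rightarrow> 'a::field mat" where
  "bmat t [] = 0\<^sub>m 0 0"
| "bmat t (m # ms) = four_block_mat (if 0 < t then pasc m else jordan_block m 0)
      (0\<^sub>m m (sum_list ms)) (0\<^sub>m (sum_list ms) m) (bmat (t - 1) ms)"

lemma bmat_dim[simp]: "dim_row (bmat t ms) = sum_list ms" "dim_col (bmat t ms) = sum_list ms"
  by (induction ms arbitrary: t, auto)

lemma bmat_carrier: "bmat t ms \<in> carrier_mat (sum_list ms) (sum_list ms)"
  by (rule carrier_matI, simp_all)

lemma bmat_similar: "similar_mat (bmat t ms :: 'a::field mat) (jordan_matrix (map (\<lambda>s. (s, 0)) ms))"
proof (induction ms arbitrary: t)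
  case Nil
  have "jordan_matrix (map (\<lambda>s. (s, 0::'a)) []) = (0\<^sub>m 0 0 :: 'a mat)"
    by (rule eq_matI, auto simp: jordan_matrix_def)
  thus ?case using similar_mat_refl[of "0\<^sub>m 0 0 :: 'a mat" 0] by simp
next
  case (Cons m ms)
  have s: "sum_list (map fst (map (\<lambda>s. (s, 0::'a)) ms)) = sum_list ms" by (induction ms, auto)
  have blk: "similar_mat (if 0 < t then pasc m else jordan_block m 0) (jordan_block m (0::'a))"
    using pasc_similar[of m] similar_mat_refl[OF jordan_block_carrier[of m "0::'a"]] by auto
  have c1: "(if 0 < t then pasc m else jordan_block m 0) \<in> carrier_mat m (m::nat)"
    by (auto simp del: jordan_block_carrier intro: jordan_block_carrier)
  show ?case
    unfolding list.map jordan_matrix_Cons bmat.simps s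
    by (rule similar_mat_four_block_0_0[OF blk Cons.IH c1 bmat_carrier])
qed

lemma pinfo_len: "\<forall>m\<in>set ms. 0 < m \<Longrightarrow> length (pinfo t ms) = sum_list ms"
  by (induction ms arbitrary: t, auto)

lemma bmat_rows:
  assumes "\<forall>m\<in>set ms. 0 < m" "p < sum_list ms" "fst (pinfo t ms ! p)"
  shows "(\<forall>q<p. (bmat t ms :: 'a::field mat) $$ (p,q) = 0) \<and>
         (bmat t ms :: 'a mat) $$ (p,p) = (if snd (pinfo t ms ! p) then 1 else 0)"
  using assms
proof (induction ms arbitrary: t p)
  case Nil thus ?case by simp
next
  case (Cons m ms)
  have m: "0 < m" using Cons.prems by simp
  define F where "F = (if 0 < t then replicate (m - 1) (True, True) @ [(False, False)]
      else replicate m (True, False))"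
  have lF: "length F = m" using m unfolding F_def by auto
  have pi: "pinfo t (m # ms) = F @ pinfo (t - 1) ms" unfolding F_def by simp
  define A :: "'a mat" where "A = (if 0 < t then pasc m else jordan_block m 0)"
  have Ad: "dim_row A = m" "dim_col A = m" unfolding A_def by auto
  have bm: "bmat t (m # ms) = four_block_mat A (0\<^sub>m m (sum_list ms)) (0\<^sub>m (sum_list ms) m) (bmat (t - 1) ms)"
    unfolding A_def by simp
  show ?case
  proof (cases "p < m")
    case True
    have inf: "pinfo t (m # ms) ! p = F ! p" unfolding pi using True lF by (simp add: nth_append)
    show ?thesis
    proof (cases "0 < t")
      case t: True
      have "p < m - 1"
      proof (rule ccontr)
        assume "\<not> p < m - 1" hence "p = m - 1" using True by simp
        hence "F ! p = (False, False)" using t unfolding F_def by (simp add: nth_append)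
        thus False using Cons.prems(3) inf by simp
      qed
      hence Fp: "F ! p = (True, True)" using t unfolding F_def by (simp add: nth_append)
      have "\<forall>q<p. A $$ (p,q) = 0" "A $$ (p,p) = 1"
        using t \<open>p < m - 1\<close> by (auto simp: A_def pasc_def)
      thus ?thesis unfolding bm inf Fp using True Ad by auto
    next
      case t: False
      hence Fp: "F ! p = (True, False)" using True unfolding F_def by simp
      have "\<forall>q<p. A $$ (p,q) = 0" "A $$ (p,p) = 0"
        using t True by (auto simp: A_def jordan_block_def)
      thus ?thesis unfolding bm inf Fp using True Ad by auto
    qed
  next
    case False
    define p' where "p' = p - m"
    have pp: "p = m + p'" using False unfolding p'_def by simp
    have p'l: "p' < sum_list ms" using Cons.prems(2) pp by simp
    have inf: "pinfo t (m # ms) ! p = pinfo (t - 1) ms ! p'" unfolding pi pp using lF by (simp add: nth_append)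
    have IH: "(\<forall>q<p'. (bmat (t - 1) ms :: 'a mat) $$ (p',q) = 0) \<and>
         (bmat (t - 1) ms :: 'a mat) $$ (p',p') = (if snd (pinfo (t - 1) ms ! p') then 1 else 0)"
      using Cons.IH[of p' "t - 1"] Cons.prems inf p'l by simp
    have r1: "\<forall>q<p. bmat t (m # ms) $$ (p,q) = (0::'a)"
    proof (intro allI impI)
      fix q assume q: "q < p"
      show "bmat t (m # ms) $$ (p,q) = (0::'a)"
      proof (cases "q < m")
        case True thus ?thesis unfolding bm using pp p'l q Ad by simp
      next
        case False
        hence "q - m < p'" using q pp by simp
        thus ?thesis unfolding bm using pp p'l q Ad False IH by simp
      qed
    qed
    have r2: "bmat t (m # ms) $$ (p,p) = (bmat (t - 1) ms :: 'a mat) $$ (p',p')"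
      unfolding bm using pp p'l Ad by simp
    show ?thesis using r1 r2 IH inf by simp
  qed
qed

lemma pinfo_cnt0: "\<forall>m\<in>set ms. 0 < m \<Longrightarrow>
  length (filter (\<lambda>x. x = (True, False)) (pinfo t ms)) = sum_list (drop t ms)"
proof (induction ms arbitrary: t)
  case Nil thus ?case by simp
next
  case (Cons m ms) thus ?case by (cases t, auto simp: filter_replicate)
qed

lemma pinfo_cntG: "\<forall>m\<in>set ms. 0 < m \<Longrightarrow>
  length (filter fst (pinfo t ms)) + min t (length ms) = sum_list ms"
proof (induction ms arbitrary: t)
  case Nil thus ?case by simp
next
  case (Cons m ms)
  show ?case
  proof (cases t)
    case 0
    have "length (filter fst (pinfo 0 ms)) + min 0 (length ms) = sum_list ms"
      using Cons.IH[of 0] Cons.prems by simp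
    thus ?thesis using 0 Cons.prems by (auto simp: filter_replicate)
  next
    case (Suc t')
    have "length (filter fst (pinfo t' ms)) + min t' (length ms) = sum_list ms"
      using Cons.IH[of t'] Cons.prems by simp
    thus ?thesis using Suc Cons.prems by (auto simp: filter_replicate)
  qed
qed

lemma prod_list_01: "\<forall>x\<in>set xs. x = 0 \<or> x = (1::'a::comm_ring_1) \<Longrightarrow>
  prod_list xs = (if 0 \<in> set xs then 0 else 1)"
  by (induction xs, auto)

lemma stable_rank_tri:
  fixes Y :: "'a::field mat"
  assumes Y: "Y \<in> carrier_mat k k" and ut: "\<forall>p<k. \<forall>q<p. Y $$ (p,q) = 0"
    and dg: "\<forall>p<k. Y $$ (p,p) = (if p \<in> D then 1 else 0)" and D: "D \<subseteq> {..<k}"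
  shows "stable_rank Y = card D"
proof -
  have fD: "finite D" using D finite_subset by blast
  have minor: "det (submatrix Y T T) = (if T \<subseteq> D then 1 else 0)" if T: "T \<subseteq> {..<k}" for T
  proof -
    define j where "j = card T"
    have fT: "finite T" using T finite_subset by blast
    have cs: "{p. p < k \<and> p \<in> T} = T" using T by auto
    have Yd: "dim_row Y = k" "dim_col Y = k" using Y by auto
    have Mc: "submatrix Y T T \<in> carrier_mat j j"
      by (rule carrier_matI, simp_all add: Yd cs dim_submatrix j_def)
    have ent: "submatrix Y T T $$ (r,c) = Y $$ (pick T r, pick T c)" if "r < j" "c < j" for r c
      using that Y cs by (simp add: submatrix_index j_def)
    have pk: "pick T r < k" if "r < j" for r using pick_in_set_le[of r T] that T j_def by auto
    have utM: "upper_triangular (submatrix Y T T)"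
    proof (rule upper_triangularI)
      fix r c assume rc: "c < r" "r < dim_row (submatrix Y T T)"
      hence r: "r < j" using Mc by auto
      have "pick T c < pick T r" using pick_mono_le[of r T c] rc r j_def by simp
      thus "submatrix Y T T $$ (r,c) = 0" using ent[OF r] rc r ut pk[OF r] by simp
    qed
    have "det (submatrix Y T T) = prod_list (diag_mat (submatrix Y T T))"
      by (rule det_upper_triangular[OF utM Mc])
    also have "diag_mat (submatrix Y T T) = map (\<lambda>r. if pick T r \<in> D then 1 else 0) [0..<j]"
      using Mc by (auto simp: diag_mat_def ent dg pk)
    also have "prod_list \<dots> = (if T \<subseteq> D then 1 else 0)"
    proof -
      have bT: "pick T ` {..<j} = T" using bij_pick[OF fT] unfolding j_def bij_betw_def by auto
      have e1: "(0::'a) \<in> set (map (\<lambda>r. if pick T r \<in> D then 1 else 0) [0..<j]) \<longleftrightarrow> (\<exists>r<j. pick T r \<notin> D)"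
      proof
        assume "(0::'a) \<in> set (map (\<lambda>r. if pick T r \<in> D then 1 else 0) [0..<j])"
        then obtain r where r: "r < j" "(if pick T r \<in> D then 1 else 0) = (0::'a)"
          unfolding set_map set_upt by auto
        hence "pick T r \<notin> D" by (cases "pick T r \<in> D", simp_all)
        thus "\<exists>r<j. pick T r \<notin> D" using r by blast
      next
        assume "\<exists>r<j. pick T r \<notin> D"
        then obtain r where r: "r < j" "pick T r \<notin> D" by blast
        show "(0::'a) \<in> set (map (\<lambda>r. if pick T r \<in> D then 1 else 0) [0..<j])"
          unfolding set_map set_upt using r by (intro image_eqI[of _ _ r], auto)
      qed
      have e2: "(\<exists>r<j. pick T r \<notin> D) \<longleftrightarrow> \<not> T \<subseteq> D"
      proof
        assume "\<exists>r<j. pick T r \<notin> D"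
        then obtain r where r: "r < j" "pick T r \<notin> D" by blast
        have "pick T r \<in> pick T ` {..<j}" using r by simp
        hence "pick T r \<in> T" using bT by simp
        thus "\<not> T \<subseteq> D" using r by auto
      next
        assume "\<not> T \<subseteq> D"
        then obtain x where x: "x \<in> T" "x \<notin> D" by auto
        hence "x \<in> pick T ` {..<j}" using bT by simp
        then obtain r where "r < j" "x = pick T r" by auto
        thus "\<exists>r<j. pick T r \<notin> D" using x by auto
      qed
      have "(0::'a) \<in> set (map (\<lambda>r. if pick T r \<in> D then 1 else 0) [0..<j]) \<longleftrightarrow> \<not> T \<subseteq> D"
        using e1 e2 by simp
      thus ?thesis by (subst prod_list_01, auto)
    qed
    finally show ?thesis .
  qed
  define TS where "TS j = {T. T \<subseteq> {..<k} \<and> card T = j}" for j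
  have fTS: "finite (TS j)" for j
    by (rule finite_subset[of _ "Pow {..<k}"], auto simp: TS_def)
  have ps: "principal_minor_sum Y j = (\<Sum>T\<in>TS j. if T \<subseteq> D then 1 else 0)" for j
    unfolding principal_minor_sum_def TS_def using Y minor by (intro sum.cong, auto)
  have psD: "principal_minor_sum Y (card D) = 1"
  proof -
    have "principal_minor_sum Y (card D) = (\<Sum>T\<in>TS (card D). if T = D then 1 else 0)"
      unfolding ps
    proof (rule sum.cong[OF refl])
      fix T assume "T \<in> TS (card D)"
      hence "card T = card D" unfolding TS_def by simp
      hence "T \<subseteq> D \<longleftrightarrow> T = D" using card_subset_eq[OF fD, of T] by auto
      thus "(if T \<subseteq> D then 1 else (0::'a)) = (if T = D then 1 else 0)" by simp
    qed
    also have "\<dots> = 1"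
    proof -
      have "D \<in> TS (card D)" using D by (simp add: TS_def)
      thus ?thesis using sum.delta[OF fTS[of "card D"], of D "\<lambda>_. (1::'a)"] by simp
    qed
    finally show ?thesis .
  qed
  have psbig: "principal_minor_sum Y j = 0" if "card D < j" for j
    unfolding ps
  proof (rule sum.neutral, intro ballI)
    fix T assume "T \<in> TS j"
    hence "card T = j" unfolding TS_def by simp
    hence "\<not> T \<subseteq> D" using that card_mono[OF fD, of T] by auto
    thus "(if T \<subseteq> D then 1 else (0::'a)) = 0" by simp
  qed
  have cDk: "card D \<le> k" using card_mono[OF _ D] by simp
  show ?thesis unfolding stable_rank_def
  proof (rule Greatest_equality)
    show "card D \<le> dim_row Y \<and> principal_minor_sum Y (card D) \<noteq> 0" using psD cDk Y by simp
    fix y assume "y \<le> dim_row Y \<and> principal_minor_sum Y y \<noteq> 0"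
    thus "y \<le> card D" using psbig by (meson not_le)
  qed
qed

lemma len_le_sum: "\<forall>m\<in>set xs. 0 < (m::nat) \<Longrightarrow> length xs \<le> sum_list xs"
  by (induction xs, auto)

theorem lemma2p3:
  fixes lam :: "nat list" and n i :: nat
  assumes "is_partition lam n"
    and "1 \<le> i" and "i \<le> n - 1"
  shows "\<exists>X :: 'k :: alg_closed_field mat. X \<in> nilpotent_orbit n lam \<and>
           int (stable_rank (lead_sub X i)) = d_lam n lam i"
proof -
  have pos: "\<forall>m\<in>set lam. 0 < m" and sn: "sum_list lam = n"
    using assms(1) unfolding is_partition_def by auto
  have iln: "i < n" using assms(2,3) by simp
  define t where "t = n - i"
  define info where "info = pinfo t lam"
  define B :: "'k mat" where "B = bmat t lam"
  define s where "s = sum_list (drop t lam)"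
  have li: "length info = n" unfolding info_def using pinfo_len[OF pos] sn by simp
  define G where "G = {p. p < n \<and> fst (info ! p)}"
  define G0 where "G0 = {p. p < n \<and> info ! p = (True, False)}"
  have cG0: "card G0 = s"
    using pinfo_cnt0[OF pos, of t] li unfolding G0_def s_def info_def
    by (simp add: length_filter_conv_card)
  have cG: "card G + min t (length lam) = n"
    using pinfo_cntG[OF pos, of t] li sn unfolding G_def info_def
    by (simp add: length_filter_conv_card)
  hence cGi: "i \<le> card G" unfolding t_def using iln by linarith
  have G0G: "G0 \<subseteq> G" unfolding G0_def G_def by auto
  have fG: "finite G" unfolding G_def by simp
  have fG0: "finite G0" unfolding G0_def by simp
  have si: "s \<le> i"
  proof (cases "t \<le> length lam")
    case True
    have "\<forall>m\<in>set (take t lam). 0 < m" using pos by (auto dest: in_set_takeD)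
    hence "length (take t lam) \<le> sum_list (take t lam)" by (rule len_le_sum)
    moreover have "sum_list (take t lam) + s = n"
      unfolding s_def sn[symmetric] using sum_list_append[of "take t lam" "drop t lam"] by simp
    ultimately show ?thesis using True unfolding t_def by simp
  next
    case False thus ?thesis unfolding s_def by simp
  qed
  have "card (G - G0) = card G - s" using card_Diff_subset[OF fG0 G0G] cG0 by simp
  hence "i - s \<le> card (G - G0)" using cGi by simp
  then obtain T' where T': "T' \<subseteq> G - G0" "card T' = i - s" "finite T'"
    by (rule obtain_subset_with_card_n)
  define S where "S = G0 \<union> T'"
  have cS: "card S = i" unfolding S_def
    using card_Un_disjoint[OF fG0 T'(3)] T'(1,2) cG0 si by auto
  have SG: "S \<subseteq> G" unfolding S_def using T'(1) G0G by auto
  have Sn: "S \<subseteq> {..<n}" using SG unfolding G_def by auto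
  have Bc: "B \<in> carrier_mat n n" unfolding B_def using bmat_carrier[of t lam] sn by simp
  obtain X where Xc: "X \<in> carrier_mat n n" and simX: "similar_mat X B"
    and XY: "lead_sub X i = submatrix B S S"
    using exists_lead[OF Bc Sn cS] by blast
  have orb: "X \<in> nilpotent_orbit n lam"
  proof -
    have "similar_mat B (jordan_matrix (map (\<lambda>s. (s, 0::'k)) lam))"
      unfolding B_def by (rule bmat_similar)
    thus ?thesis unfolding nilpotent_orbit_def using Xc similar_mat_trans[OF simX] by simp
  qed
  define Y where "Y = submatrix B S S"
  have cs: "{p. p < n \<and> p \<in> S} = S" using Sn by auto
  have Bd: "dim_row B = n" "dim_col B = n" using Bc by auto
  have Yc: "Y \<in> carrier_mat i i"
    by (rule carrier_matI, simp_all add: Y_def Bd cs cS dim_submatrix)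
  have Yent: "Y $$ (r,c) = B $$ (pick S r, pick S c)" if "r < i" "c < i" for r c
    using that Bd cs cS by (simp add: Y_def submatrix_index)
  have fS: "finite S" using Sn finite_subset by blast
  have bS: "bij_betw (pick S) {..<i} S" using bij_pick[OF fS] cS by simp
  have pS: "pick S r \<in> S" if "r < i" for r using bS that unfolding bij_betw_def by auto
  have rows: "(\<forall>q<pick S r. B $$ (pick S r, q) = 0) \<and>
      B $$ (pick S r, pick S r) = (if snd (info ! pick S r) then 1 else 0)" if r: "r < i" for r
  proof -
    have "pick S r \<in> G" using pS[OF r] SG by auto
    hence "pick S r < sum_list lam" "fst (pinfo t lam ! pick S r)"
      unfolding G_def info_def using sn by auto
    thus ?thesis using bmat_rows[OF pos] unfolding B_def info_def by blast
  qed
  define D where "D = {r. r < i \<and> snd (info ! pick S r)}"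
  have ut: "\<forall>p<i. \<forall>q<p. Y $$ (p,q) = 0"
  proof (intro allI impI)
    fix p q assume p: "p < i" and q: "q < p"
    have "pick S q < pick S p" using pick_mono_le[of p S q] p q cS by simp
    thus "Y $$ (p,q) = 0" using Yent[of p q] p q rows[OF p] by simp
  qed
  have dg: "\<forall>p<i. Y $$ (p,p) = (if p \<in> D then 1 else 0)"
    using Yent rows unfolding D_def by simp
  have Di: "D \<subseteq> {..<i}" unfolding D_def by auto
  have srY: "stable_rank Y = card D" by (rule stable_rank_tri[OF Yc ut dg Di])
  have imD: "pick S ` D = S - G0"
  proof
    show "pick S ` D \<subseteq> S - G0"
    proof
      fix x assume "x \<in> pick S ` D"
      then obtain r where r: "r < i" "snd (info ! pick S r)" "x = pick S r" unfolding D_def by auto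
      thus "x \<in> S - G0" using pS[OF r(1)] unfolding G0_def by auto
    qed
    show "S - G0 \<subseteq> pick S ` D"
    proof
      fix x assume x: "x \<in> S - G0"
      hence "x \<in> pick S ` {..<i}" using bS unfolding bij_betw_def by auto
      then obtain r where r: "r < i" "x = pick S r" by auto
      have "x \<in> G" using x SG by auto
      hence "fst (info ! x)" "x < n" unfolding G_def by auto
      moreover have "info ! x \<noteq> (True, False)" using x \<open>x < n\<close> unfolding G0_def by auto
      ultimately have "snd (info ! x)" by (cases "info ! x", auto)
      thus "x \<in> pick S ` D" using r unfolding D_def by auto
    qed
  qed
  have "inj_on (pick S) D" using bS Di unfolding bij_betw_def by (meson inj_on_subset)
  hence "card D = card (S - G0)" using imD card_image by fastforce
  also have "\<dots> = i - s" using card_Diff_subset[OF fG0] cS cG0 unfolding S_def by auto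
  finally have cD: "card D = i - s" .
  have "int (stable_rank (lead_sub X i)) = int i - int s"
    using XY srY cD si unfolding Y_def by simp
  also have "\<dots> = d_lam n lam i" unfolding d_lam_def s_def t_def by simp
  finally show ?thesis using orb by blast
qed

end
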